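(* Let $\mathsf G=(\mathsf V,\mathsf E)$ be a finite connected graph without loops or multiple edges, with discrete Laplacian $\mathcal L=\mathcal I\mathcal I^T$. Then the semigroup $(e^{-t\mathcal L^2})_{t\ge0}$ is eventually irreducible: there exists $t_0>0$ such that for all $t\ge t_0$ and all $f\in\mathbb R^V$ with $f\ge0$, $f\ne0$, every entry of $e^{-t\mathcal L^2}f$ is strictly positive.
   Context: $V=|\mathsf V|$. After fixing an arbitrary orientation of the edges, the incidence matrix $\mathcal I\in\mathbb R^{V\times E}$ has entries $\iota_{\mathsf v\mathsf e}=-1$ if $\mathsf v$ is the initial endpoint of $\mathsf e$, $+1$ if $\mathsf v$ is the terminal endpoint of $\mathsf e$, and $0$ otherwise; $\mathcal L=\mathcal I\mathcal I^T$. *)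

theory Defs
  imports "HOL-Analysis.Analysis"
begin

text \<open>Finite simple graph on the vertex type 'v: edges are 2-element vertex sets
  (so no loops and no multiple edges).\<close>
definition simple_graph :: "'v set set \<Rightarrow> bool" where
  "simple_graph E \<longleftrightarrow> (\<forall>e\<in>E. card e = 2)"

definition graph_connected :: "'v set set \<Rightarrow> bool" where
  "graph_connected E \<longleftrightarrow> (\<forall>u w. (\<lambda>x y. {x, y} \<in> E)\<^sup>*\<^sup>* u w)"

definition orientation :: "'v set set \<Rightarrow> ('v set \<Rightarrow> 'v) \<Rightarrow> ('v set \<Rightarrow> 'v) \<Rightarrow> bool" where
  "orientation E ini ter \<longleftrightarrow> (\<forall>e\<in>E. e = {ini e, ter e})"

definition incidence :: "('v set \<Rightarrow> 'v) \<Rightarrow> ('v set \<Rightarrow> 'v) \<Rightarrow> 'v \<Rightarrow> 'v set \<Rightarrow> real" where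
  "incidence ini ter v e = (if v = ini e then -1 else if v = ter e then 1 else 0)"

definition laplacian :: "'v set set \<Rightarrow> ('v set \<Rightarrow> 'v) \<Rightarrow> ('v set \<Rightarrow> 'v) \<Rightarrow> real ^ 'v ^ 'v" where
  "laplacian E ini ter = (\<chi> u w. \<Sum>e\<in>E. incidence ini ter u e * incidence ini ter w e)"

primrec matpow :: "real ^ 'n ^ 'n \<Rightarrow> nat \<Rightarrow> real ^ 'n ^ 'n" where
  "matpow A 0 = mat 1"
| "matpow A (Suc k) = A ** matpow A k"

definition mexp :: "real ^ 'n ^ 'n \<Rightarrow> real ^ 'n ^ 'n" where
  "mexp A = (\<Sum>k. (1 / fact k) *\<^sub>R matpow A k)"

end

theory Submission
  imports Defs
begin


lemma sym_inner:
  fixes A :: "real^'n^'n" assumes "transpose A = A"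
  shows "(A *v x) \<bullet> y = x \<bullet> (A *v y)"
proof -
  have "x \<bullet> (A *v y) = (x v* A) \<bullet> y" by (simp add: dot_lmul_matrix)
  also have "x v* A = transpose A *v x" by simp
  finally show ?thesis using assms by simp
qed

lemma quad_lin_zero:
  fixes a c :: real assumes "\<And>s. 2 * s * a + s^2*c \<le> 0" shows "a = 0"
proof (rule ccontr)
  assume "a \<noteq> 0"
  define d where "d = \<bar>c\<bar> + 1"
  have d: "d > 0" "2*d + c > 0" unfolding d_def by auto
  have "2*(a/d)*a + (a/d)^2*c = (a/d)^2 * (2*d + c)"
    using d by (simp add: power2_eq_square field_simps)
  moreover have "(a/d)^2 > 0" using \<open>a\<noteq>0\<close> d by simp
  ultimately have "2*(a/d)*a + (a/d)^2*c > 0" using d by simp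
  with assms[of "a/d"] show False by simp
qed

lemma max_eigen:
  fixes A :: "real^'n^'n"
  assumes sym: "transpose A = A" and S: "subspace S" and inv: "\<And>x. x\<in>S \<Longrightarrow> A *v x \<in> S"
    and ne: "S \<noteq> {0}"
  shows "\<exists>v\<in>S. norm v = 1 \<and> A *v v = (v \<bullet> (A *v v)) *\<^sub>R v"
proof -
  let ?q = "\<lambda>x. x \<bullet> (A *v x)"
  define K where "K = S \<inter> sphere 0 1"
  have cK: "compact K" unfolding K_def
    by (rule closed_Int_compact[OF closed_subspace[OF S] compact_sphere])
  obtain x where x: "x \<in> S" "x \<noteq> 0" using ne S subspace_0 by blast
  have "x /\<^sub>R norm x \<in> K" unfolding K_def using x S by (simp add: subspace_scale)
  hence Kne: "K \<noteq> {}" by auto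
  have cont: "continuous_on K ?q"
    by (intro continuous_intros linear_continuous_on) (auto intro: matrix_vector_mul_linear)
  obtain v where v: "v \<in> K" and vmax: "\<And>y. y \<in> K \<Longrightarrow> ?q y \<le> ?q v"
    using continuous_attains_sup[OF cK Kne cont] by blast
  define l where "l = ?q v"
  have vS: "v \<in> S" and nv: "norm v = 1" using v unfolding K_def by auto
  have vv: "v \<bullet> v = 1" using nv by (simp add: dot_square_norm)
  have qscale: "?q (c *\<^sub>R y) = c^2 * ?q y" for c y
    by (simp add: matrix_vector_mult_scaleR power2_eq_square)
  have bound: "?q y \<le> l * (y \<bullet> y)" if "y \<in> S" for y
  proof (cases "y = 0")
    case True then show ?thesis by simp
  next
    case False
    have "(1/norm y) *\<^sub>R y \<in> K" unfolding K_def using that False S by (simp add: subspace_scale)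
    hence "?q ((1/norm y) *\<^sub>R y) \<le> l" using vmax l_def by blast
    hence "(1/norm y)^2 * ?q y \<le> l" by (simp only: qscale)
    moreover have "(norm y)^2 = y \<bullet> y" by (simp add: dot_square_norm)
    moreover have "norm y > 0" using False by simp
    ultimately show ?thesis by (simp add: field_simps power2_eq_square)
  qed
  have orth: "w \<bullet> (A *v v) = 0" if "w \<in> S" "w \<bullet> v = 0" for w
  proof -
    have "2 * s * (w \<bullet> (A *v v)) + s^2*(?q w - l * (w \<bullet> w)) \<le> 0" for s
    proof -
      have "v + s *\<^sub>R w \<in> S" using S vS that by (simp add: subspace_add subspace_scale)
      from bound[OF this]
      have "?q (v + s *\<^sub>R w) \<le> l * ((v + s *\<^sub>R w) \<bullet> (v + s *\<^sub>R w))" .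
      moreover have h1: "v \<bullet> (A *v w) = w \<bullet> (A *v v)"
        using sym_inner[OF sym, of v w] by (simp add: inner_commute)
      have "?q (v + s *\<^sub>R w) = l + 2 * s * (w \<bullet> (A *v v)) + s^2 * ?q w"
        using h1
        by (simp add: l_def matrix_vector_right_distrib matrix_vector_mult_scaleR
             inner_add_left inner_add_right power2_eq_square algebra_simps)
      moreover have "(v + s *\<^sub>R w) \<bullet> (v + s *\<^sub>R w) = 1 + s^2 * (w \<bullet> w)"
        using vv that(2) by (simp add: inner_add_left inner_add_right power2_eq_square inner_commute)
      ultimately have "l + 2 * s * (w \<bullet> (A *v v)) + s^2 * ?q w \<le> l + l * (s^2 * (w \<bullet> w))"
        by (simp add: distrib_left)
      thus ?thesis by (simp add: right_diff_distrib mult.left_commute)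
    qed
    thus ?thesis by (rule quad_lin_zero)
  qed
  define w where "w = A *v v - l *\<^sub>R v"
  have wS: "w \<in> S" unfolding w_def using S inv[OF vS] vS by (simp add: subspace_diff subspace_scale)
  have wv: "w \<bullet> v = 0" unfolding w_def using vv
    by (simp add: inner_diff_left inner_diff_right l_def inner_commute)
  have "w \<bullet> w = w \<bullet> (A *v v) - l * (w \<bullet> v)" unfolding w_def
    by (simp add: inner_diff_right)
  also have "\<dots> = 0" using orth[OF wS wv] wv by simp
  finally have "w = 0" by simp
  thus ?thesis using vS nv unfolding w_def l_def by (intro bexI[of _ v]) auto
qed

lemma spectral_sub:
  fixes A :: "real^'n^'n"
  assumes sym: "transpose A = A"
  shows "subspace S \<Longrightarrow> (\<And>x. x\<in>S \<Longrightarrow> A *v x \<in> S) \<Longrightarrow>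
    \<exists>B \<mu>. B \<subseteq> S \<and> pairwise orthogonal B \<and> (\<forall>b\<in>B. norm b = 1 \<and> A *v b = \<mu> b *\<^sub>R b) \<and> S \<subseteq> span B"
proof (induction "dim S" arbitrary: S rule: less_induct)
  case (less S)
  show ?case
  proof (cases "S = {0}")
    case True
    then show ?thesis by (intro exI[of _ "{}"]) auto
  next
    case False
    obtain v where vS: "v \<in> S" and nv: "norm v = 1" and ev: "A *v v = (v \<bullet> (A *v v)) *\<^sub>R v"
      using max_eigen[OF sym less.prems(1) less.prems(2) False] by blast
    define l where "l = v \<bullet> (A *v v)"
    define S' where "S' = {x\<in>S. v \<bullet> x = 0}"
    have sub': "subspace S'" using less.prems(1) unfolding S'_def subspace_def
      by (auto simp: inner_add_right)
    have inv': "A *v x \<in> S'" if "x \<in> S'" for x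
    proof -
      have "v \<bullet> (A *v x) = (A *v v) \<bullet> x" using sym_inner[OF sym] by simp
      also have "\<dots> = l * (v \<bullet> x)" by (subst ev) (simp add: l_def)
      finally show ?thesis using that less.prems(2) unfolding S'_def by auto
    qed
    have vv: "v \<bullet> v = 1" using nv by (simp add: dot_square_norm)
    have vS': "v \<notin> S'" using vv unfolding S'_def by auto
    have "span S' \<subset> span S"
    proof -
      have e: "span S' = S'" "span S = S" using sub' less.prems(1) by (simp_all add: span_eq_iff)
      have "S' \<subset> S" using vS vS' unfolding S'_def by blast
      thus ?thesis by (simp only: e)
    qed
    hence "dim S' < dim S" by (rule dim_psubset)
    from less.hyps[OF this sub' inv'] obtain B \<mu> where
      B: "B \<subseteq> S'" "pairwise orthogonal B" "\<forall>b\<in>B. norm b = 1 \<and> A *v b = \<mu> b *\<^sub>R b" "S' \<subseteq> span B"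
      by blast
    have vB: "v \<notin> B" using B(1) vS' by auto
    show ?thesis
    proof (intro exI[of _ "insert v B"] exI[of _ "\<mu>(v := l)"] conjI)
      show "insert v B \<subseteq> S" using B(1) vS unfolding S'_def by auto
      show "pairwise orthogonal (insert v B)"
        using B(1,2) unfolding pairwise_insert S'_def
        by (auto simp: orthogonal_def inner_commute)
      show "\<forall>b\<in>insert v B. norm b = 1 \<and> A *v b = (\<mu>(v := l)) b *\<^sub>R b"
        using B(3) vB nv ev l_def by auto
      show "S \<subseteq> span (insert v B)"
      proof
        fix x assume xS: "x \<in> S"
        have "x - (v \<bullet> x) *\<^sub>R v \<in> S'" unfolding S'_def using xS vS vv less.prems(1)
          by (simp add: subspace_diff subspace_scale inner_diff_right)
        hence "x - (v \<bullet> x) *\<^sub>R v \<in> span (insert v B)" using B(4) span_mono[of B "insert v B"] by auto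
        moreover have "(v \<bullet> x) *\<^sub>R v \<in> span (insert v B)" by (simp add: span_base span_scale)
        ultimately have "(x - (v \<bullet> x) *\<^sub>R v) + (v \<bullet> x) *\<^sub>R v \<in> span (insert v B)"
          by (rule span_add)
        thus "x \<in> span (insert v B)" by simp
      qed
    qed
  qed
qed

lemma spectral:
  fixes A :: "real^'n^'n"
  assumes sym: "transpose A = A"
  shows "\<exists>B \<mu>. finite B \<and> pairwise orthogonal B \<and> (\<forall>b\<in>B. norm b = 1 \<and> A *v b = \<mu> b *\<^sub>R b)
     \<and> (\<forall>x. x = (\<Sum>b\<in>B. (x \<bullet> b) *\<^sub>R b))"
proof -
  obtain B \<mu> where B: "pairwise orthogonal B" "\<forall>b\<in>B. norm b = 1 \<and> A *v b = \<mu> b *\<^sub>R b" "UNIV \<subseteq> span B"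
    using spectral_sub[OF sym, of UNIV] by auto
  have "0 \<notin> B" using B(2) by force
  hence fin: "finite B" using pairwise_orthogonal_independent[OF B(1)] finiteI_independent by blast
  show ?thesis
    using orthonormal_basis_expand[OF B(1) _ _ fin] B fin by (intro exI[of _ B] exI[of _ \<mu>]) (metis UNIV_I subsetD)
qed



lemma exp_decay:
  fixes c :: real assumes "c > 0"
  shows "((\<lambda>t. exp (- t * c)) \<longlongrightarrow> 0) at_top"
proof -
  have "filterlim (\<lambda>t. c * t) at_top at_top"
    by (rule filterlim_tendsto_pos_mult_at_top[OF tendsto_const assms filterlim_ident])
  hence "filterlim (\<lambda>t. - (c * t)) at_bot at_top" by (simp add: filterlim_uminus_at_bot)
  hence "filterlim (\<lambda>t. - t * c) at_bot at_top" by (simp add: mult.commute)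
  from filterlim_compose[OF exp_at_bot this] show ?thesis .
qed

lemma lap_sym: "transpose (laplacian E ini ter) = laplacian E ini ter"
  by (simp add: laplacian_def transpose_def mult.commute vec_eq_iff)

lemma ini_ter:
  assumes "simple_graph E" "orientation E ini ter" "e \<in> E"
  shows "ini e \<noteq> ter e"
proof
  assume "ini e = ter e"
  moreover have "e = {ini e, ter e}" using assms(2,3) unfolding orientation_def by blast
  ultimately have e1: "e = {ini e}" by simp
  have "card e = 1" by (subst e1) simp
  moreover have "card e = 2" using assms(1,3) unfolding simple_graph_def by blast
  ultimately show False by simp
qed

lemma inc_sum:
  assumes "ini e \<noteq> ter e"
  shows "(\<Sum>w\<in>UNIV. incidence ini ter w e * (x::real^'v::finite) $ w) = x $ ter e - x $ ini e"
proof -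
  have "(\<Sum>w\<in>UNIV. incidence ini ter w e * x $ w)
     = (\<Sum>w\<in>UNIV. (if w = ter e then x $ w else 0) - (if w = ini e then x $ w else 0))"
    using assms by (intro sum.cong) (auto simp: incidence_def)
  also have "\<dots> = x $ ter e - x $ ini e"
    by (simp add: sum_subtractf)
  finally show ?thesis .
qed

lemma lap_apply:
  assumes "simple_graph E" "orientation E ini ter"
  shows "(laplacian E ini ter *v (x::real^'v::finite)) $ u
     = (\<Sum>e\<in>E. incidence ini ter u e * (x $ ter e - x $ ini e))"
proof -
  have "(laplacian E ini ter *v x) $ u
     = (\<Sum>w\<in>UNIV. (\<Sum>e\<in>E. incidence ini ter u e * incidence ini ter w e) * x $ w)"
    by (simp add: laplacian_def matrix_vector_mult_def)
  also have "\<dots> = (\<Sum>e\<in>E. incidence ini ter u e * (\<Sum>w\<in>UNIV. incidence ini ter w e * x $ w))"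
  proof -
    have "(\<Sum>w\<in>UNIV. (\<Sum>e\<in>E. incidence ini ter u e * incidence ini ter w e) * x $ w)
       = (\<Sum>w\<in>UNIV. \<Sum>e\<in>E. incidence ini ter u e * (incidence ini ter w e * x $ w))"
      by (simp add: sum_distrib_right mult.assoc)
    also have "\<dots> = (\<Sum>e\<in>E. \<Sum>w\<in>UNIV. incidence ini ter u e * (incidence ini ter w e * x $ w))"
      by (rule sum.swap)
    also have "\<dots> = (\<Sum>e\<in>E. incidence ini ter u e * (\<Sum>w\<in>UNIV. incidence ini ter w e * x $ w))"
      by (simp add: sum_distrib_left)
    finally show ?thesis .
  qed
  also have "\<dots> = (\<Sum>e\<in>E. incidence ini ter u e * (x $ ter e - x $ ini e))"
    by (intro sum.cong refl) (simp add: inc_sum ini_ter[OF assms])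
  finally show ?thesis .
qed

lemma lap_quad:
  assumes "simple_graph E" "orientation E ini ter"
  shows "x \<bullet> (laplacian E ini ter *v (x::real^'v::finite)) = (\<Sum>e\<in>E. (x $ ter e - x $ ini e)^2)"
proof -
  have "x \<bullet> (laplacian E ini ter *v x)
     = (\<Sum>u\<in>UNIV. x $ u * (\<Sum>e\<in>E. incidence ini ter u e * (x $ ter e - x $ ini e)))"
    by (simp add: inner_vec_def lap_apply[OF assms])
  also have "\<dots> = (\<Sum>e\<in>E. (x $ ter e - x $ ini e) * (\<Sum>u\<in>UNIV. incidence ini ter u e * x $ u))"
  proof -
    have "(\<Sum>u\<in>UNIV. x $ u * (\<Sum>e\<in>E. incidence ini ter u e * (x $ ter e - x $ ini e)))
       = (\<Sum>u\<in>UNIV. \<Sum>e\<in>E. (x $ ter e - x $ ini e) * (incidence ini ter u e * x $ u))"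
      by (simp add: sum_distrib_left mult.commute mult.left_commute)
    also have "\<dots> = (\<Sum>e\<in>E. \<Sum>u\<in>UNIV. (x $ ter e - x $ ini e) * (incidence ini ter u e * x $ u))"
      by (rule sum.swap)
    also have "\<dots> = (\<Sum>e\<in>E. (x $ ter e - x $ ini e) * (\<Sum>u\<in>UNIV. incidence ini ter u e * x $ u))"
      by (simp add: sum_distrib_left)
    finally show ?thesis .
  qed
  also have "\<dots> = (\<Sum>e\<in>E. (x $ ter e - x $ ini e)^2)"
    by (intro sum.cong refl) (simp add: inc_sum ini_ter[OF assms] power2_eq_square)
  finally show ?thesis .
qed

lemma lap_kernel:
  assumes "simple_graph E" "graph_connected E" "orientation E ini ter"
    and "laplacian E ini ter *v (x::real^'v::finite) = 0"
  shows "x $ u = x $ w"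
proof -
  have s0: "(\<Sum>e\<in>E. (x $ ter e - x $ ini e)^2) = 0"
    using lap_quad[OF assms(1,3), of x] assms(4) by simp
  have fin: "finite E" by (rule finite)
  have d: "\<forall>e\<in>E. (x $ ter e - x $ ini e)^2 = 0"
    using sum_nonneg_eq_0_iff[OF fin, of "\<lambda>e. (x $ ter e - x $ ini e)^2"] s0 by simp
  have stp: "x $ a = x $ b" if ab: "{a, b} \<in> E" for a b
  proof -
    have o: "\<forall>e\<in>E. e = {ini e, ter e}" using assms(3) unfolding orientation_def by simp
    from o ab have e: "{a,b} = {ini {a,b}, ter {a,b}}" by (rule bspec)
    have "a \<in> {ini {a,b}, ter {a,b}}" "b \<in> {ini {a,b}, ter {a,b}}" by (subst e[symmetric], simp)+
    moreover from d ab have "(x $ ter {a,b} - x $ ini {a,b})^2 = 0" by (rule bspec)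
    hence "x $ ter {a,b} = x $ ini {a,b}" by simp
    ultimately show ?thesis by auto
  qed
  have "(\<lambda>x y. {x, y} \<in> E)\<^sup>*\<^sup>* u w" using assms(2) unfolding graph_connected_def by blast
  thus ?thesis
  proof (induction rule: rtranclp_induct)
    case base then show ?case by (rule refl)
  next
    case (step y z)
    from step.IH step(2)[THEN stp] show ?case by (rule trans)
  qed
qed


lemma ortho_coeff:
  fixes B :: "(real^'n) set"
  assumes fin: "finite B" and po: "pairwise orthogonal B" and n1: "\<forall>b\<in>B. norm b = 1" and b': "b' \<in> B"
  shows "(\<Sum>b\<in>B. c b *\<^sub>R b) \<bullet> b' = c b'"
proof -
  have "(\<Sum>b\<in>B. c b *\<^sub>R b) \<bullet> b' = (\<Sum>b\<in>B. c b * (b \<bullet> b'))"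
    by (simp add: inner_sum_left)
  also have "\<dots> = (\<Sum>b\<in>B. if b = b' then c b' else 0)"
  proof (intro sum.cong refl)
    fix b assume b: "b \<in> B"
    show "c b * (b \<bullet> b') = (if b = b' then c b' else 0)"
    proof (cases "b = b'")
      case True
      have "b' \<bullet> b' = 1" using n1 b' by (simp add: dot_square_norm)
      then show ?thesis using True by simp
    next
      case False
      have "b \<bullet> b' = 0" using po b b' False unfolding pairwise_def orthogonal_def by blast
      then show ?thesis using False by simp
    qed
  qed
  also have "\<dots> = c b'" using fin b' by (simp add: sum.delta')
  finally show ?thesis .
qed

lemma matpow_eig:
  assumes "A *v b = m *\<^sub>R b"
  shows "matpow A k *v b = (m ^ k) *\<^sub>R b"
proof (induction k)
  case 0 then show ?case by (simp add: matrix_vector_mul_lid)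
next
  case (Suc k)
  have "matpow A (Suc k) *v b = A *v (matpow A k *v b)"
    by (simp add: matrix_vector_mul_assoc)
  also have "\<dots> = (m ^ Suc k) *\<^sub>R b"
    using Suc.IH assms by (simp add: matrix_vector_mult_scaleR)
  finally show ?case .
qed

lemma matpow_entry:
  fixes A :: "real^'n^'n"
  assumes fin: "finite B" and exp: "\<forall>x. x = (\<Sum>b\<in>B. (x \<bullet> b) *\<^sub>R b)"
    and eig: "\<forall>b\<in>B. A *v b = c b *\<^sub>R b"
  shows "matpow A k $ i $ j = (\<Sum>b\<in>B. b $ j * (c b ^ k * b $ i))"
proof -
  have "matpow A k $ i $ j = (matpow A k *v axis j 1) $ i"
    by (simp add: matrix_vector_mult_basis column_def)
  also have "axis j 1 = (\<Sum>b\<in>B. (b $ j) *\<^sub>R b)"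
    using exp[rule_format, of "axis j (1::real)"] by (simp add: inner_axis')
  also have "matpow A k *v (\<Sum>b\<in>B. (b $ j) *\<^sub>R b) = (\<Sum>b\<in>B. (b $ j * c b ^ k) *\<^sub>R b)"
  proof -
    have "matpow A k *v ((b $ j) *\<^sub>R b) = (b $ j * c b ^ k) *\<^sub>R b" if "b \<in> B" for b
      using matpow_eig[of A b "c b" k] eig that by (simp add: matrix_vector_mult_scaleR)
    thus ?thesis by (simp add: vec.sum)
  qed
  also have "(\<dots>) $ i = (\<Sum>b\<in>B. b $ j * (c b ^ k * b $ i))"
    by (simp add: mult.assoc)
  finally show ?thesis .
qed

lemma mexp_entry:
  fixes A :: "real^'n^'n"
  assumes fin: "finite B" and exp: "\<forall>x. x = (\<Sum>b\<in>B. (x \<bullet> b) *\<^sub>R b)"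
    and eig: "\<forall>b\<in>B. A *v b = c b *\<^sub>R b"
  shows "mexp A = (\<chi> i j. \<Sum>b\<in>B. b $ j * (exp (c b) * b $ i))"
proof -
  let ?F = "\<lambda>k. (1 / fact k) *\<^sub>R matpow A k"
  let ?M = "(\<chi> i j. \<Sum>b\<in>B. b $ j * (exp (c b) * b $ i)) :: real^'n^'n"
  have "?F sums ?M"
    unfolding sums_def
  proof (rule vec_tendstoI, rule vec_tendstoI)
    fix i j
    have ps: "(\<Sum>k<n. ?F k) $ i $ j = (\<Sum>b\<in>B. b $ j * ((\<Sum>k<n. c b ^ k / fact k) * b $ i))" for n
    proof -
      have "(\<Sum>k<n. ?F k) $ i $ j = (\<Sum>k<n. (1 / fact k) * (\<Sum>b\<in>B. b $ j * (c b ^ k * b $ i)))"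
        using matpow_entry[OF fin exp eig] by simp
      also have "\<dots> = (\<Sum>k<n. \<Sum>b\<in>B. b $ j * ((c b ^ k / fact k) * b $ i))"
        by (simp add: sum_distrib_left mult.commute mult.left_commute)
      also have "\<dots> = (\<Sum>b\<in>B. \<Sum>k<n. b $ j * ((c b ^ k / fact k) * b $ i))"
        by (rule sum.swap)
      also have "\<dots> = (\<Sum>b\<in>B. b $ j * ((\<Sum>k<n. c b ^ k / fact k) * b $ i))"
        by (simp add: sum_distrib_left sum_distrib_right)
      finally show ?thesis .
    qed
    have lim: "(\<lambda>n. \<Sum>k<n. c b ^ k / fact k) \<longlonglongrightarrow> exp (c b)" for b
    proof -
      have "(\<lambda>k. c b ^ k /\<^sub>R fact k) sums exp (c b)" by (rule exp_converges)
      thus ?thesis by (simp add: sums_def divide_inverse mult.commute)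
    qed
    show "(\<lambda>n. (\<Sum>k<n. ?F k) $ i $ j) \<longlonglongrightarrow> ?M $ i $ j"
      unfolding ps by (simp, intro tendsto_intros lim)
  qed
  thus ?thesis unfolding mexp_def by (rule sums_unique[symmetric])
qed


theorem proposition6p1:
  fixes E :: "('v::finite) set set" and ini ter :: "'v set \<Rightarrow> 'v"
  assumes "simple_graph E" and "graph_connected E" and "orientation E ini ter"
  shows "\<exists>t0>0. \<forall>t\<ge>t0. \<forall>f :: real ^ 'v.
           (\<forall>v. f $ v \<ge> 0) \<and> f \<noteq> 0 \<longrightarrow>
           (\<forall>v. (mexp ((- t) *\<^sub>R (laplacian E ini ter ** laplacian E ini ter)) *v f) $ v > 0)"
proof -
  define L where "L = laplacian E ini ter"
  obtain B \<mu> where fin: "finite B" and po: "pairwise orthogonal B"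
    and Bp: "\<forall>b\<in>B. norm b = 1 \<and> L *v b = \<mu> b *\<^sub>R b"
    and ex: "\<forall>x. x = (\<Sum>b\<in>B. (x \<bullet> b) *\<^sub>R b)"
    using spectral[OF lap_sym[of E ini ter]] unfolding L_def by blast
  have n1: "\<forall>b\<in>B. norm b = 1" using Bp by blast
  define g where "g i j t = (\<Sum>b\<in>B. b $ j * (exp (- t * (\<mu> b)^2) * b $ i))" for i j :: 'v and t :: real
  have mexp_eq: "mexp ((- t) *\<^sub>R (L ** L)) = (\<chi> i j. g i j t)" for t
  proof -
    have "\<forall>b\<in>B. ((- t) *\<^sub>R (L ** L)) *v b = (- t * (\<mu> b)^2) *\<^sub>R b"
    proof
      fix b assume b: "b \<in> B"
      have "((- t) *\<^sub>R (L ** L)) *v b = (- t) *\<^sub>R (L *v (L *v b))"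
        by (subst scaleR_matrix_vector_assoc[symmetric]) (simp only: matrix_vector_mul_assoc)
      also have "\<dots> = (- t * (\<mu> b)^2) *\<^sub>R b"
        using Bp b by (simp add: matrix_vector_mult_scaleR power2_eq_square)
      finally show "((- t) *\<^sub>R (L ** L)) *v b = (- t * (\<mu> b)^2) *\<^sub>R b" .
    qed
    from mexp_entry[OF fin ex this] show ?thesis unfolding g_def by simp
  qed
  define l where "l i j = (\<Sum>b\<in>B. b $ j * ((if \<mu> b = 0 then 1 else 0) * b $ i))" for i j :: 'v
  have lim: "((\<lambda>t. g i j t) \<longlongrightarrow> l i j) at_top" for i j
    unfolding g_def l_def
  proof (intro tendsto_sum tendsto_mult tendsto_const)
    fix b assume "b \<in> B"
    show "((\<lambda>t. exp (- t * (\<mu> b)^2)) \<longlongrightarrow> (if \<mu> b = 0 then 1 else 0)) at_top"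
    proof (cases "\<mu> b = 0")
      case True then show ?thesis by simp
    next
      case False then show ?thesis using exp_decay[of "(\<mu> b)^2"] by simp
    qed
  qed
  have const: "b $ i = b $ j" if "b \<in> B" "\<mu> b = 0" for b i j
    using lap_kernel[OF assms, of b] Bp that unfolding L_def by simp
  define one :: "real^'v" where "one = (\<chi> i. 1)"
  have L1: "L *v one = 0"
    unfolding L_def one_def by (simp add: vec_eq_iff lap_apply[OF assms(1,3)])
  obtain b0 where b0: "b0 \<in> B" "\<mu> b0 = 0" "one \<bullet> b0 \<noteq> 0"
  proof (rule ccontr)
    assume "\<not> thesis"
    hence H: "\<forall>b\<in>B. \<mu> b = 0 \<longrightarrow> one \<bullet> b = 0" using that by blast
    have zero: "one \<bullet> b' = 0" if b': "b' \<in> B" for b'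
    proof -
      have "L *v one = L *v (\<Sum>b\<in>B. (one \<bullet> b) *\<^sub>R b)" using ex by metis
      also have "\<dots> = (\<Sum>b\<in>B. ((one \<bullet> b) * \<mu> b) *\<^sub>R b)"
        using Bp by (simp add: vec.sum matrix_vector_mult_scaleR)
      finally have "(\<Sum>b\<in>B. ((one \<bullet> b) * \<mu> b) *\<^sub>R b) \<bullet> b' = 0" using L1 by simp
      hence "(one \<bullet> b') * \<mu> b' = 0" using ortho_coeff[OF fin po n1 b'] by simp
      thus ?thesis using H b' by auto
    qed
    have "one = (\<Sum>b\<in>B. (one \<bullet> b) *\<^sub>R b)" using ex by metis
    also have "\<dots> = 0" using zero by simp
    finally have "one = 0" .
    moreover have "one \<noteq> 0" unfolding one_def by (simp add: vec_eq_iff)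
    ultimately show False by simp
  qed
  have lpos: "l i j > 0" for i j
  proof -
    have nz: "b0 $ i \<noteq> 0"
    proof
      assume "b0 $ i = 0"
      hence "b0 = 0" using const[OF b0(1,2)] by (simp add: vec_eq_iff) (metis)
      moreover have "norm b0 = 1" using Bp b0(1) by blast
      ultimately show False by simp
    qed
    show ?thesis unfolding l_def
    proof (rule sum_pos2[OF fin b0(1)])
      show "0 < b0 $ j * ((if \<mu> b0 = 0 then 1 else 0) * b0 $ i)"
        using nz const[OF b0(1,2), of j i] b0(2) by (simp add: not_square_less_zero less_le)
      show "0 \<le> b $ j * ((if \<mu> b = 0 then 1 else 0) * b $ i)" if b: "b \<in> B" for b
      proof -
        show "0 \<le> b $ j * ((if \<mu> b = 0 then 1 else 0) * b $ i)"
        proof (cases "\<mu> b = 0")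
          case True
          hence "b $ j = b $ i" using const b by blast
          then show ?thesis using True by simp
        qed simp
      qed
    qed
  qed
  have "eventually (\<lambda>t. g i j t > 0) at_top" for i j
    using order_tendstoD(1)[OF lim lpos] .
  hence "eventually (\<lambda>t. \<forall>i j. g i j t > 0) at_top"
    by (intro eventually_all_finite) blast
  then obtain T where T: "\<And>t. t \<ge> T \<Longrightarrow> \<forall>i j. g i j t > 0"
    unfolding eventually_at_top_linorder by blast
  show ?thesis
  proof (intro exI[of _ "max T 1"] conjI allI impI)
    show "0 < max T (1::real)" by simp
    fix t :: real and f :: "real^'v" and v
    assume t: "max T 1 \<le> t" and f: "(\<forall>v. 0 \<le> f $ v) \<and> f \<noteq> 0"
    obtain w where w: "f $ w \<noteq> 0" using f by (auto simp: vec_eq_iff)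
    have gp: "\<forall>i j. g i j t > 0" using T t by simp
    have "(mexp ((- t) *\<^sub>R (L ** L)) *v f) $ v = (\<Sum>u\<in>UNIV. g v u t * f $ u)"
      unfolding mexp_eq by (simp add: matrix_vector_mult_def)
    also have "\<dots> > 0"
    proof (rule sum_pos2[of UNIV, OF finite UNIV_I[of w]])
      show "0 < g v w t * f $ w" using gp w f by (simp add: less_le)
      show "0 \<le> g v u t * f $ u" if "u \<in> UNIV" for u using gp f by (simp add: less_imp_le)
    qed
    finally show "0 < (mexp ((- t) *\<^sub>R (laplacian E ini ter ** laplacian E ini ter)) *v f) $ v"
      unfolding L_def .
  qed
qed

end
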